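(* Fix a client $k$ and $\lambda\in[0,1)$. Let $\mathcal H\subseteq\mathbb R^n$ be a closed convex parameter set of diameter at most $R$. Let $\widehat{\mathcal D}_k$ be an empirical distribution of $m_k$ samples and $\widehat{\mathcal C}$ an empirical distribution of $m_C$ samples. Assume that for every sample $z$ the per-sample loss $h\mapsto \ell(h,z)$ is $\mu$-strongly convex on $\mathcal H$ and has (sub)gradients of norm at most $G$ on $\mathcal H$. Define \[ g(h)=\lambda\,\mathcal L_{\widehat{\mathcal D}_k}(h)+(1-\lambda)\,\mathcal L_{\widehat{\mathcal C}}(h),\qquad h_{\widehat\lambda}=\arg\min_{h\in\mathcal H}g(h),\qquad h_c=\arg\min_{h\in\mathcal H}\mathcal L_{\widehat{\mathcal C}}(h), \] and $\epsilon_\lambda=\sqrt{\frac{\lambda^2}{m_k}+\frac{(1-\lambda)^2}{m_C}}$. Let \[ r\ge G^2\left(\frac{4G}{\mu}+2R\right)^2,\qquad \eta=\frac{1}{G\sqrt{r m_k}}\min\left(\frac{2G\lambda}{\mu(1-\lambda)},R\right). \] Run $T=r\,m_k$ steps of projected stochastic gradient descent on $g$ with step size $\eta$, starting from $h_c$, where at each step one independently selects $\widehat{\mathcal D}_k$ with probability $\lambda$ and $\widehat{\mathcal C}$ with probability $1-\lambda$, draws a uniformly random sample from the selected empirical distribution, and uses the gradient of the loss at that sample; let $h_A$ be the average of the iterates. Then \[ \mathbb E\big[g(h_A)\big]\le g(h_{\widehat\lambda})+\epsilon_\lambda, \] where the expectation is over the randomness of the SGD sampling.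
   Context: This is the analysis of the data-interpolation scheme for personalization: a client with local empirical data $\widehat{\mathcal D}_k$ trains on a $\lambda$-mixture of its local data and global/cluster data $\widehat{\mathcal C}$, starting from the central model $h_c$. For a (empirical) distribution $\mathcal D$, $\mathcal L_{\mathcal D}(h)=\mathbb E_{z\sim\mathcal D}[\ell(h,z)]$, where hypotheses are identified with their parameter vectors $h\in\mathcal H$. *)

theory Defs
  imports "HOL-Analysis.Analysis" "HOL-Probability.Probability"
begin

definition strongly_convex_on :: "real \<Rightarrow> 'a::real_inner set \<Rightarrow> ('a \<Rightarrow> real) \<Rightarrow> bool" where
  "strongly_convex_on \<mu> S f \<longleftrightarrow>
     (\<forall>x\<in>S. \<forall>y\<in>S. \<forall>t::real. 0 \<le> t \<and> t \<le> 1 \<longrightarrow>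
        f ((1 - t) *\<^sub>R x + t *\<^sub>R y)
          \<le> (1 - t) * f x + t * f y - \<mu> / 2 * t * (1 - t) * (norm (x - y))\<^sup>2)"

definition is_subgradient_on :: "'a::real_inner set \<Rightarrow> ('a \<Rightarrow> real) \<Rightarrow> 'a \<Rightarrow> 'a \<Rightarrow> bool" where
  "is_subgradient_on S f x v \<longleftrightarrow> (\<forall>y\<in>S. f y \<ge> f x + inner v (y - x))"

definition emp_loss :: "('a \<Rightarrow> 'z \<Rightarrow> real) \<Rightarrow> 'z list \<Rightarrow> 'a \<Rightarrow> real" where
  "emp_loss l zs h = (\<Sum>i<length zs. l h (zs ! i)) / real (length zs)"

definition uniform_sample :: "'z list \<Rightarrow> 'z pmf" where
  "uniform_sample zs = map_pmf (\<lambda>i. zs ! i) (pmf_of_set {..<length zs})"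

definition mixture_sample :: "real \<Rightarrow> 'z list \<Rightarrow> 'z list \<Rightarrow> 'z pmf" where
  "mixture_sample lam zk zC =
     bind_pmf (bernoulli_pmf lam) (\<lambda>b. if b then uniform_sample zk else uniform_sample zC)"

fun iid_list :: "'z pmf \<Rightarrow> nat \<Rightarrow> 'z list pmf" where
  "iid_list p 0 = return_pmf []"
| "iid_list p (Suc n) = bind_pmf p (\<lambda>z. map_pmf (Cons z) (iid_list p n))"

definition psgd_step :: "'a::euclidean_space set \<Rightarrow> ('a \<Rightarrow> 'z \<Rightarrow> 'a) \<Rightarrow> real \<Rightarrow> 'a \<Rightarrow> 'z \<Rightarrow> 'a" where
  "psgd_step H grad eta h z = closest_point H (h - eta *\<^sub>R grad h z)"

fun psgd_path :: "'a::euclidean_space set \<Rightarrow> ('a \<Rightarrow> 'z \<Rightarrow> 'a) \<Rightarrow> real \<Rightarrow> 'a \<Rightarrow> 'z list \<Rightarrow> 'a list" where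
  "psgd_path H grad eta h [] = [h]"
| "psgd_path H grad eta h (z # zs) = h # psgd_path H grad eta (psgd_step H grad eta h z) zs"

text \<open>Averaged output of T steps: average of the iterates h_0, ..., h_{T-1}.\<close>
definition psgd_avg :: "'a::euclidean_space set \<Rightarrow> ('a \<Rightarrow> 'z \<Rightarrow> 'a) \<Rightarrow> real \<Rightarrow> 'a \<Rightarrow> 'z list \<Rightarrow> 'a" where
  "psgd_avg H grad eta h0 zs =
     (1 / real (length zs)) *\<^sub>R (\<Sum>t<length zs. psgd_path H grad eta h0 zs ! t)"

end

theory Submission
  imports Defs
begin

lemma exp_mono_fin:
  fixes f g :: "'b \<Rightarrow> real"
  assumes "finite (set_pmf M)" "\<And>x. x \<in> set_pmf M \<Longrightarrow> f x \<le> g x"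
  shows "measure_pmf.expectation M f \<le> measure_pmf.expectation M g"
  using assms by (intro integral_mono_AE) (auto simp: integrable_measure_pmf_finite AE_measure_pmf_iff)

lemma exp_bind_fin:
  fixes f :: "'c \<Rightarrow> real"
  assumes fM: "finite (set_pmf M)" and fN: "\<And>x. x \<in> set_pmf M \<Longrightarrow> finite (set_pmf (N x))"
  shows "measure_pmf.expectation (bind_pmf M N) f = measure_pmf.expectation M (\<lambda>x. measure_pmf.expectation (N x) f)"
proof -
  define S where "S = (\<Union>x\<in>set_pmf M. set_pmf (N x))"
  have fS: "finite S" unfolding S_def by (rule finite_UN_I) (auto intro: fM fN)
  have "measure_pmf.expectation (bind_pmf M N) f = (\<Sum>y\<in>S. f y * pmf (bind_pmf M N) y)"
    by (rule integral_measure_pmf_real[OF fS]) (auto simp: S_def)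
  also have "\<dots> = (\<Sum>y\<in>S. measure_pmf.expectation M (\<lambda>x. f y * pmf (N x) y))"
    by (simp add: pmf_bind)
  also have "\<dots> = measure_pmf.expectation M (\<lambda>x. \<Sum>y\<in>S. f y * pmf (N x) y)"
    using Bochner_Integration.integral_sum[where I=S and M="measure_pmf M" and f="\<lambda>y x. f y * pmf (N x) y"] by (simp add: integrable_measure_pmf_finite fM)
  also have "\<dots> = measure_pmf.expectation M (\<lambda>x. measure_pmf.expectation (N x) f)"
  proof (rule integral_cong_AE)
    show "AE x in measure_pmf M. (\<Sum>y\<in>S. f y * pmf (N x) y) = measure_pmf.expectation (N x) f"
      unfolding AE_measure_pmf_iff
    proof
      fix x assume "x \<in> set_pmf M"
      then show "(\<Sum>y\<in>S. f y * pmf (N x) y) = measure_pmf.expectation (N x) f"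
        by (intro integral_measure_pmf_real[OF fS, symmetric]) (auto simp: S_def)
    qed
  qed auto
  finally show ?thesis .
qed

lemma set_unif: "zs \<noteq> [] \<Longrightarrow> set_pmf (uniform_sample zs) = set zs"
  unfolding uniform_sample_def by (auto simp: set_pmf_of_set lessThan_empty_iff in_set_conv_nth)

lemma exp_unif: "zs \<noteq> [] \<Longrightarrow> measure_pmf.expectation (uniform_sample zs) f
   = (\<Sum>i<length zs. f (zs ! i)) / real (length zs)"
  unfolding uniform_sample_def by (simp add: integral_pmf_of_set lessThan_empty_iff)

lemma emp_unif: "zs \<noteq> [] \<Longrightarrow> emp_loss l zs h = measure_pmf.expectation (uniform_sample zs) (l h)"
  by (simp add: emp_loss_def exp_unif)

lemma fin_mix: "zk \<noteq> [] \<Longrightarrow> zC \<noteq> [] \<Longrightarrow> finite (set_pmf (mixture_sample lam zk zC))"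
  unfolding mixture_sample_def by (auto simp: set_unif)

lemma exp_mix:
  fixes f :: "'z \<Rightarrow> real"
  assumes "0 \<le> lam" "lam \<le> 1" "zk \<noteq> []" "zC \<noteq> []"
  shows "measure_pmf.expectation (mixture_sample lam zk zC) f
     = lam * measure_pmf.expectation (uniform_sample zk) f + (1 - lam) * measure_pmf.expectation (uniform_sample zC) f"
  unfolding mixture_sample_def using assms
  by (subst exp_bind_fin) (auto simp: set_unif)

lemma iid_fin: "finite (set_pmf p) \<Longrightarrow> finite (set_pmf (iid_list p n)) \<and> (\<forall>zs\<in>set_pmf (iid_list p n). length zs = n)"
  by (induction n) auto

locale setting =
  fixes H :: "'a::euclidean_space set" and l :: "'a \<Rightarrow> 'z \<Rightarrow> real"
    and grad :: "'a \<Rightarrow> 'z \<Rightarrow> 'a" and \<mu> G :: real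
  assumes strong: "\<forall>z. strongly_convex_on \<mu> H (\<lambda>h. l h z)"
    and subgrad: "\<forall>z. \<forall>h\<in>H. is_subgradient_on H (\<lambda>h. l h z) h (grad h z)"
    and grad_bound: "\<forall>z. \<forall>h\<in>H. norm (grad h z) \<le> G"
    and mu_pos: "\<mu> > 0" and H_convex: "convex H" and H_closed: "closed H" and H_ne: "H \<noteq> {}"
begin

lemma cvx: "convex_on H (\<lambda>h. l h z)"
  unfolding convex_on_def
proof (intro conjI H_convex ballI allI impI)
  fix x y and u v :: real
  assume x: "x \<in> H" and y: "y \<in> H" and uv: "0 \<le> u" "0 \<le> v" "u + v = 1"
  have u: "u = 1 - v" using uv by simp
  have "l ((1 - v) *\<^sub>R x + v *\<^sub>R y) z \<le> (1 - v) * l x z + v * l y z - \<mu> / 2 * v * (1 - v) * (norm (x - y))\<^sup>2"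
    using strong x y uv unfolding strongly_convex_on_def by auto
  moreover have "\<mu> / 2 * v * (1 - v) * (norm (x - y))\<^sup>2 \<ge> 0"
    using mu_pos uv by (auto intro!: mult_nonneg_nonneg)
  ultimately show "l (u *\<^sub>R x + v *\<^sub>R y) z \<le> u * l x z + v * l y z" unfolding u by linarith
qed

lemma midpoint:
  assumes fq: "finite (set_pmf q)" and x: "x \<in> H" and y: "y \<in> H"
  shows "measure_pmf.expectation q (l ((1/2) *\<^sub>R x + (1/2) *\<^sub>R y))
     \<le> (measure_pmf.expectation q (l x) + measure_pmf.expectation q (l y)) / 2 - \<mu> / 8 * (norm (x - y))\<^sup>2"
proof -
  have pt: "l ((1/2) *\<^sub>R x + (1/2) *\<^sub>R y) z \<le> (1/2) * l x z + (1/2) * l y z - \<mu> / 8 * (norm (x - y))\<^sup>2" for z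
  proof -
    have "\<forall>t. 0 \<le> t \<and> t \<le> 1 \<longrightarrow> l ((1 - t) *\<^sub>R x + t *\<^sub>R y) z \<le> (1 - t) * l x z + t * l y z - \<mu> / 2 * t * (1 - t) * (norm (x - y))\<^sup>2"
      using strong x y unfolding strongly_convex_on_def by blast
    from this[rule_format, of "1/2"] show ?thesis by simp
  qed
  have "measure_pmf.expectation q (l ((1/2) *\<^sub>R x + (1/2) *\<^sub>R y))
     \<le> measure_pmf.expectation q (\<lambda>z. (1/2) * l x z + (1/2) * l y z - \<mu> / 8 * (norm (x - y))\<^sup>2)"
    using pt by (intro exp_mono_fin fq)
  also have "\<dots> = (measure_pmf.expectation q (l x) + measure_pmf.expectation q (l y)) / 2 - \<mu> / 8 * (norm (x - y))\<^sup>2"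
    by (simp add: integrable_measure_pmf_finite[OF fq])
  finally show ?thesis .
qed

lemma lip:
  assumes fq: "finite (set_pmf q)" and x: "x \<in> H" and y: "y \<in> H"
  shows "measure_pmf.expectation q (l x) - G * norm (x - y) \<le> measure_pmf.expectation q (l y)"
proof -
  have pt: "l x z - G * norm (x - y) \<le> l y z" for z
  proof -
    have "l y z \<ge> l x z + inner (grad x z) (y - x)"
      using subgrad x y unfolding is_subgradient_on_def by auto
    moreover have "inner (grad x z) (x - y) \<le> norm (grad x z) * norm (x - y)" by (rule norm_cauchy_schwarz)
    moreover have "norm (grad x z) * norm (x - y) \<le> G * norm (x - y)"
      using grad_bound x by (intro mult_right_mono) auto
    moreover have "inner (grad x z) (y - x) = - inner (grad x z) (x - y)" by (simp add: inner_diff_right)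
    ultimately show ?thesis by linarith
  qed
  have "measure_pmf.expectation q (\<lambda>z. l x z - G * norm (x - y)) \<le> measure_pmf.expectation q (l y)"
    using pt by (intro exp_mono_fin fq)
  then show ?thesis by (simp add: integrable_measure_pmf_finite[OF fq])
qed

lemma subg:
  assumes fq: "finite (set_pmf q)" and x: "x \<in> H" and y: "y \<in> H"
  shows "measure_pmf.expectation q (l x) - measure_pmf.expectation q (l y)
    \<le> measure_pmf.expectation q (\<lambda>z. inner (grad x z) (x - y))"
proof -
  have pt: "l x z - l y z \<le> inner (grad x z) (x - y)" for z
  proof -
    have "l y z \<ge> l x z + inner (grad x z) (y - x)"
      using subgrad x y unfolding is_subgradient_on_def by auto
    moreover have "inner (grad x z) (y - x) = - inner (grad x z) (x - y)" by (simp add: inner_diff_right)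
    ultimately show ?thesis by linarith
  qed
  have "measure_pmf.expectation q (\<lambda>z. l x z - l y z) \<le> measure_pmf.expectation q (\<lambda>z. inner (grad x z) (x - y))"
    using pt by (intro exp_mono_fin fq)
  then show ?thesis by (simp add: integrable_measure_pmf_finite[OF fq])
qed

lemma jensen:
  assumes fq: "finite (set_pmf q)" and T: "T > 0" and hs: "\<And>t. t < T \<Longrightarrow> hs t \<in> H"
  shows "measure_pmf.expectation q (l ((1 / real T) *\<^sub>R (\<Sum>t<T. hs t)))
     \<le> (1 / real T) * (\<Sum>t<T. measure_pmf.expectation q (l (hs t)))"
proof -
  have pt: "l ((1 / real T) *\<^sub>R (\<Sum>t<T. hs t)) z \<le> (\<Sum>t<T. (1 / real T) * l (hs t) z)" for z
  proof -
    have "l (\<Sum>t\<in>{..<T}. (1 / real T) *\<^sub>R hs t) z \<le> (\<Sum>t\<in>{..<T}. (1 / real T) * l (hs t) z)"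
      using T hs by (intro convex_on_sum[OF _ _ cvx]) auto
    then show ?thesis by (simp add: scaleR_sum_right)
  qed
  have "measure_pmf.expectation q (l ((1 / real T) *\<^sub>R (\<Sum>t<T. hs t)))
     \<le> measure_pmf.expectation q (\<lambda>z. \<Sum>t<T. (1 / real T) * l (hs t) z)"
    using pt by (intro exp_mono_fin fq)
  also have "\<dots> = (\<Sum>t<T. (1 / real T) * measure_pmf.expectation q (l (hs t)))"
    by (subst Bochner_Integration.integral_sum) (auto simp: integrable_measure_pmf_finite[OF fq])
  finally show ?thesis by (simp add: sum_distrib_left)
qed


lemma step_in: "psgd_step H grad eta h z \<in> H"
  unfolding psgd_step_def using closest_point_in_set[OF H_closed H_ne] by blast

lemma path_len: "length (psgd_path H grad eta h zs) = Suc (length zs)"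
  by (induction zs arbitrary: h) auto

lemma path_in: "h \<in> H \<Longrightarrow> t < length (psgd_path H grad eta h zs) \<Longrightarrow> psgd_path H grad eta h zs ! t \<in> H"
proof (induction zs arbitrary: h t)
  case Nil then show ?case by simp
next
  case (Cons z zs)
  show ?case
  proof (cases t)
    case 0 then show ?thesis using Cons by simp
  next
    case (Suc s) then show ?thesis using Cons.IH[OF step_in, of s] Cons.prems by simp
  qed
qed

lemma one_step:
  assumes fp: "finite (set_pmf p)" and h: "h \<in> H" and hs: "hs \<in> H" and eta: "eta \<ge> 0"
  shows "measure_pmf.expectation p (\<lambda>z. (norm (psgd_step H grad eta h z - hs))\<^sup>2)
    \<le> (norm (h - hs))\<^sup>2 - 2 * eta * (measure_pmf.expectation p (l h) - measure_pmf.expectation p (l hs)) + eta\<^sup>2 * G\<^sup>2"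
proof -
  have pt: "(norm (psgd_step H grad eta h z - hs))\<^sup>2 \<le> (norm (h - hs))\<^sup>2 - 2 * eta * inner (grad h z) (h - hs) + eta\<^sup>2 * G\<^sup>2" for z
  proof -
    let ?v = "grad h z"
    have "norm (psgd_step H grad eta h z - hs) = dist (closest_point H (h - eta *\<^sub>R ?v)) (closest_point H hs)"
      by (simp add: psgd_step_def closest_point_self[OF hs] dist_norm)
    also have "\<dots> \<le> dist (h - eta *\<^sub>R ?v) hs"
      by (rule closest_point_lipschitz[OF H_convex H_closed H_ne])
    also have "\<dots> = norm ((h - hs) - eta *\<^sub>R ?v)" by (simp add: dist_norm algebra_simps)
    finally have n1: "norm (psgd_step H grad eta h z - hs) \<le> norm ((h - hs) - eta *\<^sub>R ?v)" .
    have n2: "(norm ((h - hs) - eta *\<^sub>R ?v))\<^sup>2 = (norm (h - hs))\<^sup>2 - 2 * eta * inner ?v (h - hs) + eta\<^sup>2 * (norm ?v)\<^sup>2"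
        by (simp only: power2_norm_eq_inner) (simp add: inner_diff_left inner_diff_right inner_commute algebra_simps power2_eq_square)
    have n3: "(norm ?v)\<^sup>2 \<le> G\<^sup>2" using grad_bound h by (intro power_mono) auto
    have "(norm (psgd_step H grad eta h z - hs))\<^sup>2 \<le> (norm ((h - hs) - eta *\<^sub>R ?v))\<^sup>2"
      using n1 by (intro power_mono) auto
    moreover have "eta\<^sup>2 * (norm ?v)\<^sup>2 \<le> eta\<^sup>2 * G\<^sup>2" using n3 by (intro mult_left_mono) auto
    ultimately show ?thesis using n2 by linarith
  qed
  have "measure_pmf.expectation p (\<lambda>z. (norm (psgd_step H grad eta h z - hs))\<^sup>2)
     \<le> measure_pmf.expectation p (\<lambda>z. (norm (h - hs))\<^sup>2 - 2 * eta * inner (grad h z) (h - hs) + eta\<^sup>2 * G\<^sup>2)"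
    using pt by (intro exp_mono_fin fp)
  also have "\<dots> = (norm (h - hs))\<^sup>2 - 2 * eta * measure_pmf.expectation p (\<lambda>z. inner (grad h z) (h - hs)) + eta\<^sup>2 * G\<^sup>2"
    by (simp add: integrable_measure_pmf_finite[OF fp])
  also have "\<dots> \<le> (norm (h - hs))\<^sup>2 - 2 * eta * (measure_pmf.expectation p (l h) - measure_pmf.expectation p (l hs)) + eta\<^sup>2 * G\<^sup>2"
    using subg[OF fp h hs] eta by (simp add: mult_left_mono)
  finally show ?thesis .
qed

lemma sgd:
  assumes fp: "finite (set_pmf p)" and hs: "hs \<in> H" and eta: "eta > 0"
  shows "h \<in> H \<Longrightarrow> measure_pmf.expectation (iid_list p n)
      (\<lambda>zs. \<Sum>t<n. measure_pmf.expectation p (l (psgd_path H grad eta h zs ! t)))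
    \<le> real n * measure_pmf.expectation p (l hs) + (norm (h - hs))\<^sup>2 / (2 * eta) + real n * eta * G\<^sup>2 / 2"
proof (induction n arbitrary: h)
  case 0
  then show ?case using eta by simp
next
  case (Suc n)
  define gg where "gg = (\<lambda>h. measure_pmf.expectation p (l h))"
  define F where "F = (\<lambda>h zs. \<Sum>t<n. gg (psgd_path H grad eta h zs ! t))"
  have fI: "finite (set_pmf (iid_list p n))" using iid_fin[OF fp] by blast
  have "measure_pmf.expectation (iid_list p (Suc n))
      (\<lambda>zs. \<Sum>t<Suc n. gg (psgd_path H grad eta h zs ! t))
    = measure_pmf.expectation p (\<lambda>z. measure_pmf.expectation (iid_list p n)
      (\<lambda>zs. \<Sum>t<Suc n. gg (psgd_path H grad eta h (z # zs) ! t)))"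
    by (simp only: iid_list.simps, subst exp_bind_fin) (auto simp: fp fI)
  also have "\<dots> = measure_pmf.expectation p (\<lambda>z. gg h + measure_pmf.expectation (iid_list p n)
      (F (psgd_step H grad eta h z)))"
  proof -
    have e: "(\<Sum>t<Suc n. gg (psgd_path H grad eta h (z # zs) ! t)) = gg h + F (psgd_step H grad eta h z) zs" for z zs
      by (simp only: sum.lessThan_Suc_shift) (simp add: F_def)
    show ?thesis by (simp only: e) (simp add: integrable_measure_pmf_finite[OF fI])
  qed
  also have "\<dots> \<le> measure_pmf.expectation p (\<lambda>z. gg h + (real n * gg hs
      + (norm (psgd_step H grad eta h z - hs))\<^sup>2 / (2 * eta) + real n * eta * G\<^sup>2 / 2))"
    using Suc.IH[OF step_in] by (intro exp_mono_fin fp) (simp add: F_def gg_def)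
  also have "\<dots> = gg h + real n * gg hs
      + measure_pmf.expectation p (\<lambda>z. (norm (psgd_step H grad eta h z - hs))\<^sup>2) / (2 * eta) + real n * eta * G\<^sup>2 / 2"
    by (simp add: integrable_measure_pmf_finite[OF fp])
  also have "\<dots> \<le> gg h + real n * gg hs
      + ((norm (h - hs))\<^sup>2 - 2 * eta * (gg h - gg hs) + eta\<^sup>2 * G\<^sup>2) / (2 * eta) + real n * eta * G\<^sup>2 / 2"
    using one_step[OF fp Suc.prems hs, of eta] eta unfolding gg_def
    by (intro add_mono divide_right_mono) auto
  also have "\<dots> = real (Suc n) * gg hs + (norm (h - hs))\<^sup>2 / (2 * eta) + real (Suc n) * eta * G\<^sup>2 / 2"
    using eta by (simp add: field_simps power2_eq_square)
  finally show ?case unfolding gg_def .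
qed

end

theorem theorem2:
  fixes H :: "'a::euclidean_space set"
    and l :: "'a \<Rightarrow> 'z \<Rightarrow> real"
    and grad :: "'a \<Rightarrow> 'z \<Rightarrow> 'a"
    and zk zC :: "'z list"
    and lam \<mu> G R r :: real
    and T :: nat
    and h_lam h_c :: 'a
  assumes lam: "0 \<le> lam" "lam < 1"
    and H_closed: "closed H" and H_convex: "convex H"
    and H_diam: "\<forall>x\<in>H. \<forall>y\<in>H. dist x y \<le> R"
    and mk: "length zk \<ge> 1" and mC: "length zC \<ge> 1"
    and mu_pos: "\<mu> > 0"
    and strong: "\<forall>z. strongly_convex_on \<mu> H (\<lambda>h. l h z)"
    and subgrad: "\<forall>z. \<forall>h\<in>H. is_subgradient_on H (\<lambda>h. l h z) h (grad h z)"
    and grad_bound: "\<forall>z. \<forall>h\<in>H. norm (grad h z) \<le> G"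
    and h_lam: "h_lam \<in> H"
      "\<forall>h\<in>H. lam * emp_loss l zk h_lam + (1 - lam) * emp_loss l zC h_lam
               \<le> lam * emp_loss l zk h + (1 - lam) * emp_loss l zC h"
    and h_c: "h_c \<in> H" "\<forall>h\<in>H. emp_loss l zC h_c \<le> emp_loss l zC h"
    and r: "r \<ge> G\<^sup>2 * (4 * G / \<mu> + 2 * R)\<^sup>2"
    and T: "real T = r * real (length zk)" "T > 0"
  shows "measure_pmf.expectation (iid_list (mixture_sample lam zk zC) T)
           (\<lambda>zs. let hA = psgd_avg H grad
                             (1 / (G * sqrt (r * real (length zk)))
                                * min (2 * G * lam / (\<mu> * (1 - lam))) R)
                             h_c zs
                 in lam * emp_loss l zk hA + (1 - lam) * emp_loss l zC hA)
         \<le> lam * emp_loss l zk h_lam + (1 - lam) * emp_loss l zC h_lam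
           + sqrt (lam\<^sup>2 / real (length zk) + (1 - lam)\<^sup>2 / real (length zC))"
proof -
  have zk: "zk \<noteq> []" and zC: "zC \<noteq> []" using mk mC by auto
  have H_ne: "H \<noteq> {}" using h_c by auto
  interpret setting H l grad \<mu> G
    using strong subgrad grad_bound mu_pos H_convex H_closed H_ne by unfold_locales
  define p where "p = mixture_sample lam zk zC"
  have fp: "finite (set_pmf p)" unfolding p_def by (rule fin_mix[OF zk zC])
  have fk: "finite (set_pmf (uniform_sample zk))" using zk by (simp add: set_unif)
  have fc: "finite (set_pmf (uniform_sample zC))" using zC by (simp add: set_unif)
  define gg where "gg = (\<lambda>h. measure_pmf.expectation p (l h))"
  define Lk where "Lk = (\<lambda>h. measure_pmf.expectation (uniform_sample zk) (l h))"
  define Lc where "Lc = (\<lambda>h. measure_pmf.expectation (uniform_sample zC) (l h))"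
  have gg_eq: "lam * emp_loss l zk h + (1 - lam) * emp_loss l zC h = gg h" for h
    using lam by (simp add: gg_def p_def exp_mix[OF _ _ zk zC] emp_unif[OF zk] emp_unif[OF zC])
  have gg_eq2: "gg h = lam * Lk h + (1 - lam) * Lc h" for h
    using lam by (simp add: gg_def p_def exp_mix[OF _ _ zk zC] Lk_def Lc_def)
  have hl_min: "\<And>h. h \<in> H \<Longrightarrow> gg h_lam \<le> gg h" using h_lam(2) by (simp add: gg_eq)
  have hc_min: "\<And>h. h \<in> H \<Longrightarrow> Lc h_c \<le> Lc h" using h_c(2) by (simp add: Lc_def emp_unif[OF zC])
  have G0: "G \<ge> 0" using grad_bound h_c(1) by (meson norm_ge_zero order_trans)
  have R0: "R \<ge> 0" using H_diam h_c(1) by (meson zero_le_dist order_trans) 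
  define D where "D = norm (h_c - h_lam)"
  have D0: "D \<ge> 0" by (simp add: D_def)
  have DR: "D \<le> R" using H_diam h_c(1) h_lam(1) by (simp add: D_def dist_norm)
  define m where "m = (1/2) *\<^sub>R h_c + (1/2) *\<^sub>R h_lam"
  have mH: "m \<in> H" unfolding m_def by (rule convexD[OF H_convex h_c(1) h_lam(1)]) auto
  have c1: "Lc h_lam - Lc h_c \<ge> \<mu> / 4 * D\<^sup>2"
    using midpoint[OF fc h_c(1) h_lam(1)] hc_min[OF mH] unfolding Lc_def m_def D_def by (simp add: field_simps)
  have c2: "gg h_c - gg h_lam \<ge> \<mu> / 4 * D\<^sup>2"
    using midpoint[OF fp h_c(1) h_lam(1)] hl_min[OF mH] unfolding gg_def m_def D_def by (simp add: field_simps)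
  have c3: "Lk h_c - Lk h_lam \<le> G * D"
    using lip[OF fk h_c(1) h_lam(1)] unfolding Lk_def D_def by simp
  have key: "\<mu> / 4 * D\<^sup>2 * (2 - lam) \<le> lam * G * D"
  proof -
    have "gg h_c - gg h_lam = lam * (Lk h_c - Lk h_lam) + (1 - lam) * (Lc h_c - Lc h_lam)"
      by (simp add: gg_eq2 algebra_simps)
    also have "\<dots> \<le> lam * (G * D) + (1 - lam) * (- (\<mu> / 4 * D\<^sup>2))"
      using c1 c3 lam by (intro add_mono mult_left_mono) auto
    finally have f1: "gg h_c - gg h_lam \<le> lam * (G * D) + (1 - lam) * (- (\<mu> / 4 * D\<^sup>2))" .
    have e1: "\<mu> / 4 * D\<^sup>2 * (2 - lam) = \<mu> / 4 * D\<^sup>2 + (1 - lam) * (\<mu> / 4 * D\<^sup>2)" by (simp add: field_simps)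
    have e2: "(1 - lam) * (- (\<mu> / 4 * D\<^sup>2)) = - ((1 - lam) * (\<mu> / 4 * D\<^sup>2))" by simp
    have e3: "lam * G * D = lam * (G * D)" by simp
    show ?thesis unfolding e1 e3 using f1 e2 c2 by linarith
  qed
  have Dmu: "D * \<mu> * (1 - lam) \<le> 2 * G * lam"
  proof (cases "D = 0")
    case True then show ?thesis using G0 lam by simp
  next
    case False
    then have Dp: "D > 0" using D0 by simp
    have "\<mu> / 4 * D * (2 - lam) \<le> lam * G"
      using key Dp by (simp add: power2_eq_square)
    moreover have "D * \<mu> * (1 - lam) \<le> 2 * (\<mu> / 4 * D * (2 - lam))"
      using Dp mu_pos lam by (simp add: algebra_simps)
    moreover have "2 * G * lam = 2 * (lam * G)" by simp
    ultimately show ?thesis by linarith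
  qed
  define B where "B = min (2 * G * lam / (\<mu> * (1 - lam))) R"
  have DB: "D \<le> B"
    unfolding B_def using DR Dmu mu_pos lam by (auto simp: pos_le_divide_eq mult.assoc)
  have B0: "B \<ge> 0" using D0 DB by linarith
  have Blam: "B \<le> lam * (4 * G / \<mu> + 2 * R)"
  proof (cases "lam \<ge> 1/2")
    case True
    have "B \<le> R" unfolding B_def by simp
    also have "R \<le> lam * (2 * R)" using mult_right_mono[of 1 "lam*2" R] True R0 by (simp add: algebra_simps)
    also have "\<dots> \<le> lam * (4 * G / \<mu> + 2 * R)" using G0 mu_pos lam by (intro mult_left_mono) auto
    finally show ?thesis .
  next
    case False
    have "B \<le> 2 * G * lam / (\<mu> * (1 - lam))" unfolding B_def by simp
    also have "\<dots> \<le> 4 * G * lam / \<mu>"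
    proof -
      have "0 \<le> G * lam" using G0 lam by simp
      then have i: "G * lam * 2 \<le> G * lam * (4 * (1 - lam))"
        using False by (intro mult_left_mono) auto
      have "2 * G * lam / (1 - lam) \<le> 4 * G * lam" using i lam by (simp add: pos_divide_le_eq algebra_simps)
      then have "(2 * G * lam / (1 - lam)) / \<mu> \<le> 4 * G * lam / \<mu>" using mu_pos by (intro divide_right_mono) auto
      then show ?thesis by (simp add: divide_divide_eq_left mult.commute)
    qed
    also have "\<dots> \<le> lam * (4 * G / \<mu> + 2 * R)" using R0 lam by (simp add: algebra_simps)
    finally show ?thesis .
  qed
  define sT where "sT = sqrt (r * real (length zk))"
  have sT2: "sT\<^sup>2 = real T" unfolding sT_def using T by simp
  have rmk: "r * real (length zk) > 0" using T by (metis of_nat_0_less_iff)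
  have sTp: "sT > 0" using rmk unfolding sT_def by simp
  define eta where "eta = 1 / (G * sT) * B"
  have eps0: "0 \<le> sqrt (lam\<^sup>2 / real (length zk) + (1 - lam)\<^sup>2 / real (length zC))" by simp
  have fI: "finite (set_pmf (iid_list p T))" and lenI: "\<And>zs. zs \<in> set_pmf (iid_list p T) \<Longrightarrow> length zs = T"
    using iid_fin[OF fp] by blast+
  have LHS: "measure_pmf.expectation (iid_list (mixture_sample lam zk zC) T)
           (\<lambda>zs. let hA = psgd_avg H grad
                             (1 / (G * sqrt (r * real (length zk)))
                                * min (2 * G * lam / (\<mu> * (1 - lam))) R)
                             h_c zs
                 in lam * emp_loss l zk hA + (1 - lam) * emp_loss l zC hA)
     = measure_pmf.expectation (iid_list p T) (\<lambda>zs. gg (psgd_avg H grad eta h_c zs))"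
    by (simp add: Let_def gg_eq p_def eta_def sT_def B_def)
  show ?thesis
  proof (cases "eta = 0")
    case True
    have B00: "B = 0"
    proof (cases "G = 0")
      case True then show ?thesis unfolding B_def using R0 by simp
    next
      case False
      then show ?thesis using \<open>eta = 0\<close> G0 sTp unfolding eta_def by simp
    qed
    then have "D = 0" using D0 DB by simp
    then have hcl: "h_c = h_lam" by (simp add: D_def)
    have path0: "\<And>zs t. t < length (psgd_path H grad 0 h_c zs) \<Longrightarrow> psgd_path H grad 0 h_c zs ! t = h_c"
    proof -
      have "h \<in> H \<Longrightarrow> t < length (psgd_path H grad 0 h zs) \<Longrightarrow> psgd_path H grad 0 h zs ! t = h" for h zs t
      proof (induction zs arbitrary: h t)
        case Nil then show ?case by simp
      next
        case (Cons z zs)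
        have st: "psgd_step H grad 0 h z = h" using Cons.prems by (simp add: psgd_step_def closest_point_self)
        show ?case using Cons by (cases t) (auto simp: st)
      qed
      then show "\<And>zs t. t < length (psgd_path H grad 0 h_c zs) \<Longrightarrow> psgd_path H grad 0 h_c zs ! t = h_c"
        using h_c(1) by blast
    qed
    have "measure_pmf.expectation (iid_list p T) (\<lambda>zs. gg (psgd_avg H grad eta h_c zs))
       \<le> measure_pmf.expectation (iid_list p T) (\<lambda>zs. gg h_lam)"
    proof (rule exp_mono_fin[OF fI])
      fix zs assume zs: "zs \<in> set_pmf (iid_list p T)"
      have "psgd_avg H grad eta h_c zs = (1 / real T) *\<^sub>R (\<Sum>t<T. h_c)"
        unfolding psgd_avg_def True lenI[OF zs]
        using path0 path_len lenI[OF zs] by (intro arg_cong[where f="\<lambda>x. _ *\<^sub>R x"] sum.cong) auto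
      also have "\<dots> = h_c" using T(2) by (simp add: sum_constant_scaleR)
      finally show "gg (psgd_avg H grad eta h_c zs) \<le> gg h_lam" by (simp add: hcl)
    qed
    also have "\<dots> = gg h_lam" by simp
    finally have "measure_pmf.expectation (iid_list p T) (\<lambda>zs. gg (psgd_avg H grad eta h_c zs)) \<le> gg h_lam" .
    then show ?thesis using LHS eps0 gg_eq[of h_lam] by linarith
  next
    case False
    have Gp: "G > 0" using False G0 unfolding eta_def by (cases "G = 0") auto
    have Bp: "B > 0" using False B0 unfolding eta_def by (cases "B = 0") auto
    have etap: "eta > 0" using Gp Bp sTp unfolding eta_def by simp
    have "measure_pmf.expectation (iid_list p T) (\<lambda>zs. gg (psgd_avg H grad eta h_c zs))
       \<le> measure_pmf.expectation (iid_list p T)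
           (\<lambda>zs. (1 / real T) * (\<Sum>t<T. gg (psgd_path H grad eta h_c zs ! t)))"
    proof (rule exp_mono_fin[OF fI])
      fix zs assume zs: "zs \<in> set_pmf (iid_list p T)"
      show "gg (psgd_avg H grad eta h_c zs) \<le> (1 / real T) * (\<Sum>t<T. gg (psgd_path H grad eta h_c zs ! t))"
        unfolding psgd_avg_def lenI[OF zs] gg_def
        using path_in[OF h_c(1)] path_len lenI[OF zs] T(2)
        by (intro jensen fp) auto
    qed
    also have "\<dots> = (1 / real T) * measure_pmf.expectation (iid_list p T)
           (\<lambda>zs. \<Sum>t<T. gg (psgd_path H grad eta h_c zs ! t))" by simp
    also have "\<dots> \<le> (1 / real T) * (real T * gg h_lam + D\<^sup>2 / (2 * eta) + real T * eta * G\<^sup>2 / 2)"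
      using sgd[OF fp h_lam(1) etap h_c(1), of T] unfolding gg_def D_def by (intro mult_left_mono) auto
    also have "\<dots> = gg h_lam + D\<^sup>2 / (2 * eta * real T) + eta * G\<^sup>2 / 2"
      using T(2) by (simp add: field_simps)
    also have "\<dots> \<le> gg h_lam + (B\<^sup>2 / (2 * eta * real T) + eta * G\<^sup>2 / 2)"
      using DB D0 etap T(2) by (simp, intro divide_right_mono power_mono) auto
    also have "B\<^sup>2 / (2 * eta * real T) + eta * G\<^sup>2 / 2 = B * G / sT"
      unfolding eta_def sT2[symmetric] using Gp Bp sTp by (simp add: field_simps power2_eq_square)
    also have "gg h_lam + B * G / sT \<le> gg h_lam + sqrt (lam\<^sup>2 / real (length zk) + (1 - lam)\<^sup>2 / real (length zC))"
    proof -
      have rp: "r > 0" using rmk zk by (simp add: zero_less_mult_iff)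
      have mkp: "real (length zk) > 0" using zk by simp
      have sr: "G * (4 * G / \<mu> + 2 * R) \<le> sqrt r"
        using r by (intro real_le_rsqrt) (simp add: power_mult_distrib)
      have "B * G \<le> lam * (4 * G / \<mu> + 2 * R) * G" using Blam G0 by (intro mult_right_mono)
      also have "\<dots> = lam * (G * (4 * G / \<mu> + 2 * R))" by simp
      also have "\<dots> \<le> lam * sqrt r" using sr lam by (intro mult_left_mono) auto
      finally have BG: "B * G \<le> lam * sqrt r" .
      have sTe: "sT = sqrt r * sqrt (real (length zk))" unfolding sT_def by (simp add: real_sqrt_mult)
      have "B * G / sT \<le> lam * sqrt r / sT" using BG sTp by (intro divide_right_mono) auto
      also have "\<dots> = lam / sqrt (real (length zk))" unfolding sTe using rp mkp by simp
      also have "\<dots> = sqrt (lam\<^sup>2 / real (length zk))" using lam by (simp add: real_sqrt_divide)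
      also have "\<dots> \<le> sqrt (lam\<^sup>2 / real (length zk) + (1 - lam)\<^sup>2 / real (length zC))"
        by (intro real_sqrt_le_mono) simp
      finally show ?thesis by simp
    qed
    finally have "measure_pmf.expectation (iid_list p T) (\<lambda>zs. gg (psgd_avg H grad eta h_c zs)) \<le> gg h_lam + sqrt (lam\<^sup>2 / real (length zk) + (1 - lam)\<^sup>2 / real (length zC))" .
    then show ?thesis using LHS gg_eq[of h_lam] by linarith
  qed
qed

end
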